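(* Let $A$ and $B$ be commutative torsion groups such that $B[p^\infty]=\{0\}$ for all but finitely many primes $p$. Identify $A=\bigoplus_p A[p^\infty]$ and $B=\bigoplus_p B[p^\infty]$ (sums over all primes), and regard $f_\bullet=(f_p)_p\in\bigoplus_p B[p^\infty]^{A[p^\infty]}$ as the map $(x_p)_p\mapsto(f_p(x_p))_p$. Then: (a) $\operatorname{fdeg}(f_\bullet)=\max_p\operatorname{fdeg}(f_p)$ for all such $f_\bullet$; (b) $\mathcal F_n(A,B)=\bigoplus_p\mathcal F_n(A[p^\infty],B[p^\infty])$ for all $n\in\mathbb N\cup\{-\infty\}$; (c) $\mathcal F(A,B)=\bigoplus_p\mathcal F(A[p^\infty],B[p^\infty])$.
   Context: For commutative groups $A,B$, $B^A$ denotes the commutative group (under pointwise addition) of all maps $A\to B$. For $a\in A$, the difference operator $\Delta_a:B^A\to B^A$ is $(\Delta_a f)(x)=f(x+a)-f(x)$. Let $\widetilde{\mathbb N}=\mathbb N\cup\{-\infty,\infty\}$ ($\mathbb N=\{0,1,2,\dots\}$), totally ordered with $-\infty$ least and $\infty$ greatest. The functional degree $\operatorname{fdeg}(f)\in\widetilde{\mathbb N}$ of $f\in B^A$ is: $-\infty$ if $f=0$; otherwise the least $n\in\mathbb N$ such that $\Delta_{a_1}\cdots\Delta_{a_{n+1}}f=0$ for all $a_1,\dots,a_{n+1}\in A$; and $\infty$ if no such $n$ exists. For $n\in\widetilde{\mathbb N}$, $\mathcal F_n(A,B)=\{f\in B^A:\operatorname{fdeg}(f)\le n\}$, and $\mathcal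 F(A,B)=\bigcup_{n<\infty}\mathcal F_n(A,B)$. For a prime $p$, $A[p^\infty]=\{x\in A:p^kx=0\text{ for some }k\ge1\}$. *)

theory Defs
  imports "HOL-Library.Extended_Real" "HOL-Computational_Algebra.Primes"
begin

primrec gmul :: "nat \<Rightarrow> 'a::ab_group_add \<Rightarrow> 'a" where
  "gmul 0 x = 0"
| "gmul (Suc n) x = x + gmul n x"

text \<open>The p-primary part A[p^\<infinity>] (as a subset of the ambient type).\<close>
definition ptors :: "nat \<Rightarrow> 'a::ab_group_add set" where
  "ptors p = {x. \<exists>k\<ge>1. gmul (p ^ k) x = 0}"

definition Delta :: "'a::ab_group_add \<Rightarrow> ('a \<Rightarrow> 'b::ab_group_add) \<Rightarrow> 'a \<Rightarrow> 'b" where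
  "Delta a f = (\<lambda>x. f (x + a) - f x)"

primrec iter_Delta :: "'a::ab_group_add list \<Rightarrow> ('a \<Rightarrow> 'b::ab_group_add) \<Rightarrow> 'a \<Rightarrow> 'b" where
  "iter_Delta [] f = f"
| "iter_Delta (a # as) f = Delta a (iter_Delta as f)"

text \<open>All (n+1)-fold differences with steps in S vanish on S (f viewed as a map S \<rightarrow> B).\<close>
definition diffs_vanish_on :: "'a::ab_group_add set \<Rightarrow> ('a \<Rightarrow> 'b::ab_group_add) \<Rightarrow> nat \<Rightarrow> bool" where
  "diffs_vanish_on S f n \<longleftrightarrow>
     (\<forall>as. length as = Suc n \<longrightarrow> set as \<subseteq> S \<longrightarrow> (\<forall>x\<in>S. iter_Delta as f x = 0))"

text \<open>Functional degree of f restricted to the subgroup S, valued in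
  N \<union> {-\<infinity>, \<infinity>} embedded in ereal.\<close>
definition fdeg_on :: "'a::ab_group_add set \<Rightarrow> ('a \<Rightarrow> 'b::ab_group_add) \<Rightarrow> ereal" where
  "fdeg_on S f =
     (if \<forall>x\<in>S. f x = 0 then -\<infinity>
      else if \<exists>n. diffs_vanish_on S f n then ereal (real (LEAST n. diffs_vanish_on S f n))
      else \<infinity>)"

abbreviation fdeg :: "('a::ab_group_add \<Rightarrow> 'b::ab_group_add) \<Rightarrow> ereal" where
  "fdeg f \<equiv> fdeg_on UNIV f"

text \<open>Primary decomposition x = \<Sum>_p x_p (identification A = \<Oplus>_p A[p^\<infinity>]).\<close>
definition is_prim_decomp :: "'a::ab_group_add \<Rightarrow> (nat \<Rightarrow> 'a) \<Rightarrow> bool" where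
  "is_prim_decomp x c \<longleftrightarrow>
     (\<forall>p. c p \<in> ptors p) \<and> (\<forall>p. \<not> prime p \<longrightarrow> c p = 0) \<and>
     finite {p. c p \<noteq> 0} \<and> x = (\<Sum>p\<in>{p. c p \<noteq> 0}. c p)"

definition pcomp :: "'a::ab_group_add \<Rightarrow> nat \<Rightarrow> 'a" where
  "pcomp x = (THE c. is_prim_decomp x c)"

text \<open>An element (f_p)_p of \<Oplus>_p B[p^\<infinity>]^{A[p^\<infinity>]}: each f_p maps A[p^\<infinity>] into B[p^\<infinity>]
  (values outside A[p^\<infinity>] are irrelevant), and only finitely many f_p are nonzero.\<close>
definition prim_family :: "(nat \<Rightarrow> 'a::ab_group_add \<Rightarrow> 'b::ab_group_add) \<Rightarrow> bool" where
  "prim_family f \<longleftrightarrow>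
     (\<forall>p. prime p \<longrightarrow> (\<forall>x\<in>ptors p. f p x \<in> ptors p)) \<and>
     finite {p. prime p \<and> \<not> (\<forall>x\<in>ptors p. f p x = 0)}"

text \<open>The map (x_p)_p \<mapsto> (f_p(x_p))_p, read back in B = \<Oplus>_p B[p^\<infinity>].\<close>
definition glue :: "(nat \<Rightarrow> 'a::ab_group_add \<Rightarrow> 'b::ab_group_add) \<Rightarrow> 'a \<Rightarrow> 'b" where
  "glue f x = (\<Sum>p\<in>{p. prime p \<and> f p (pcomp x p) \<noteq> 0}. f p (pcomp x p))"

end

theory Submission
  imports Defs
begin



lemma gmul_add: "gmul (m + n) x = gmul m x + gmul n x"
  by (induction m) (simp_all add: add.assoc)

lemma gmul_zero[simp]: "gmul n 0 = 0"
  by (induction n) simp_all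

lemma gmul_plus: "gmul n (x + y) = gmul n x + gmul n y"
  by (induction n) (simp_all add: algebra_simps)

lemma gmul_mult: "gmul (m * n) x = gmul m (gmul n x)"
  by (induction m) (simp_all add: gmul_add gmul_plus)

lemma gmul_uminus: "gmul n (- x) = - gmul n x"
  by (induction n) simp_all

lemma gmul_diff: "gmul n (x - y) = gmul n x - gmul n y"
  using gmul_plus[of n x "-y"] by (simp add: gmul_uminus)

lemma gmul_one[simp]: "gmul (Suc 0) x = x" by simp

lemma gmul_kill1: "gmul a x = 0 \<Longrightarrow> gmul (b * a) x = 0"
  by (simp add: gmul_mult)

lemma gmul_kill2: "gmul a x = 0 \<Longrightarrow> gmul (a * b) x = 0"
  using gmul_kill1[of a x b] by (simp add: mult.commute)

lemma gmul_dvd: "gmul a x = 0 \<Longrightarrow> a dvd b \<Longrightarrow> gmul b x = 0"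
  by (auto simp: dvd_def gmul_kill2)

lemma coprime_kill:
  fixes x :: "'a::ab_group_add"
  assumes "gmul a x = 0" "gmul b x = 0" "coprime a b"
  shows "x = 0"
proof (cases "a = 0")
  case True
  then have "b = 1" using assms(3) by simp
  then show ?thesis using assms(2) by simp
next
  case False
  from bezout_nat[OF False, of b] assms(3) obtain u v where uv: "a * u = b * v + 1" by auto
  have "gmul (a * u) x = 0" using assms(1) by (rule gmul_kill2)
  moreover have "gmul (b * v + 1) x = x" using gmul_kill2[OF assms(2), of v]
    by (simp add: gmul_add)
  ultimately show ?thesis using uv by simp
qed

lemma ptors_zero[simp]: "0 \<in> ptors p"
  unfolding ptors_def by (intro CollectI exI[of _ 1]) simp

lemma ptors_add: assumes "x \<in> ptors p" "y \<in> ptors p" shows "x + y \<in> ptors p"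
proof -
  obtain k l where k: "k \<ge> 1" "gmul (p^k) x = 0" and l: "l \<ge> 1" "gmul (p^l) y = 0"
    using assms unfolding ptors_def by auto
  have "gmul (p^(k+l)) x = 0" using gmul_dvd[OF k(2)] by (simp add: power_add)
  moreover have "gmul (p^(k+l)) y = 0" using gmul_dvd[OF l(2)] by (simp add: power_add)
  ultimately show ?thesis unfolding ptors_def using k by (auto simp: gmul_plus intro!: exI[of _ "k+l"])
qed

lemma ptors_uminus: assumes "x \<in> ptors p" shows "- x \<in> ptors p"
  using assms unfolding ptors_def by (auto simp: gmul_uminus)

lemma ptors_diff: assumes "x \<in> ptors p" "y \<in> ptors p" shows "x - y \<in> ptors p"
  using ptors_add[OF assms(1) ptors_uminus[OF assms(2)]] by simp

lemma ptors_other_kill: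
  fixes e :: "nat \<Rightarrow> 'a::ab_group_add"
  assumes "finite S" "\<forall>p\<in>S. prime p \<and> p \<noteq> q \<and> e p \<in> ptors p" "prime q"
  shows "\<exists>N>0. coprime N q \<and> gmul N (sum e S) = 0"
  using assms
proof (induction S rule: finite_induct)
  case empty
  then show ?case by (intro exI[of _ 1]) simp
next
  case (insert p S)
  then obtain N where N: "N > 0" "coprime N q" "gmul N (sum e S) = 0" by auto
  from insert obtain k where k: "k \<ge> 1" "gmul (p^k) (e p) = 0" unfolding ptors_def by auto
  have pq: "prime p" "p \<noteq> q" using insert by auto
  have "coprime p q" using pq insert.prems(2) by (simp add: primes_coprime)
  then have "coprime (p^k * N) q" using N(2) by simp
  moreover have "gmul (p^k * N) (sum e (insert p S)) = 0"
    using insert(1,2) gmul_kill1[OF N(3), of "p^k"] gmul_kill2[OF k(2), of N]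
    by (simp add: gmul_plus)
  moreover have "p^k * N > 0" using N(1) pq(1) prime_gt_0_nat by simp
  ultimately show ?case by blast
qed

lemma decomp_unique0:
  fixes e :: "nat \<Rightarrow> 'a::ab_group_add"
  assumes "finite S" "\<forall>p\<in>S. prime p \<and> e p \<in> ptors p" "sum e S = 0" "q \<in> S"
  shows "e q = 0"
proof -
  have q: "prime q" "e q \<in> ptors q" using assms by auto
  obtain N where N: "N > 0" "coprime N q" "gmul N (sum e (S - {q})) = 0"
    using ptors_other_kill[of "S - {q}" q e] assms q by auto
  have "e q = - sum e (S - {q})" using assms(3) sum.remove[OF assms(1,4), of e]
    by (simp add: eq_neg_iff_add_eq_0)
  then have "gmul N (e q) = 0" using N(3) by (simp add: gmul_uminus)
  moreover obtain k where k: "k \<ge> 1" "gmul (q^k) (e q) = 0" using q unfolding ptors_def by auto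
  moreover have "coprime N (q^k)" using N(2) by simp
  ultimately show ?thesis using coprime_kill by blast
qed




lemma decompI:
  assumes "\<forall>p. c p \<in> ptors p" "\<forall>p. \<not> prime p \<longrightarrow> c p = 0" "finite S"
    "{p. c p \<noteq> 0} \<subseteq> S" "x = sum c S"
  shows "is_prim_decomp x c"
proof -
  have "finite {p. c p \<noteq> 0}" using assms(3,4) finite_subset by blast
  moreover have "sum c S = sum c {p. c p \<noteq> 0}"
    using assms(3,4) by (intro sum.mono_neutral_right) auto
  ultimately show ?thesis using assms unfolding is_prim_decomp_def by simp
qed

lemma decompD:
  assumes "is_prim_decomp x c" "finite S" "{p. c p \<noteq> 0} \<subseteq> S"
  shows "x = sum c S"
proof -
  have "sum c S = sum c {p. c p \<noteq> 0}"
    using assms(2,3) by (intro sum.mono_neutral_right) auto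
  then show ?thesis using assms(1) unfolding is_prim_decomp_def by simp
qed

lemma decomp_unique:
  assumes "is_prim_decomp x c" "is_prim_decomp x d"
  shows "c = d"
proof
  fix q
  define S where "S = {p. c p \<noteq> 0} \<union> {p. d p \<noteq> 0}"
  have fS: "finite S" using assms unfolding is_prim_decomp_def S_def by simp
  have "x = sum c S" "x = sum d S" using decompD[OF assms(1) fS] decompD[OF assms(2) fS]
    unfolding S_def by auto
  then have z: "sum (\<lambda>p. c p - d p) S = 0" by (simp add: sum_subtractf)
  have pr: "\<forall>p\<in>S. prime p \<and> c p - d p \<in> ptors p"
    using assms unfolding is_prim_decomp_def S_def by (auto intro: ptors_diff)
  show "c q = d q"
  proof (cases "q \<in> S")
    case True
    then show ?thesis using decomp_unique0[OF fS pr z True] by simp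
  next
    case False
    then show ?thesis unfolding S_def by simp
  qed
qed

lemma decomp_exists:
  fixes x :: "'a::ab_group_add"
  assumes "n > 0" "gmul n x = 0"
  shows "\<exists>c. is_prim_decomp x c"
  using assms
proof (induction n arbitrary: x rule: less_induct)
  case (less n)
  show ?case
  proof (cases "n = 1")
    case True
    then have "x = 0" using less.prems by simp
    then show ?thesis by (intro exI[of _ "\<lambda>_. 0"] decompI[where S="{}"]) auto
  next
    case False
    then obtain p where p: "prime p" "p dvd n" using less.prems(1)
      by (metis prime_factor_nat)
    obtain m where m: "n = p ^ multiplicity p n * m" "\<not> p dvd m"
      using multiplicity_decompose'[of n p] less.prems(1) p(1)
      by (metis not_prime_unit neq0_conv)
    define k where "k = multiplicity p n"
    have k1: "k \<ge> 1" unfolding k_def using p less.prems(1)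
      by (simp add: Suc_le_eq prime_multiplicity_gt_zero_iff)
    have m0: "m > 0" using m less.prems(1) by (auto intro: Nat.gr0I)
    have p2: "p ^ k \<ge> 2" using k1 p
      by (metis One_nat_def less_one linorder_not_less power_one_right power_increasing prime_ge_2_nat le_trans prime_gt_0_nat)
    have mn: "m < n" using m p2 m0 unfolding k_def[symmetric] by simp
    have cop: "coprime (p ^ k) m" using m(2) p by (simp add: prime_imp_coprime)
    have pk0: "p ^ k \<noteq> 0" using p by simp
    from bezout_nat[OF pk0, of m] cop obtain u v where uv: "p ^ k * u = m * v + 1" by auto
    define y where "y = gmul (p ^ k * u) x"
    have ny: "n = p ^ k * m" using m unfolding k_def by simp
    have "gmul m y = gmul (u * n) x" unfolding y_def by (simp add: gmul_mult[symmetric] ny ac_simps)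
    then have my: "gmul m y = 0" using gmul_kill1[OF less.prems(2)] by simp
    obtain c where c: "is_prim_decomp y c" using less.IH[OF mn m0 my] by blast
    define z where "z = x - y"
    have "y = gmul (m * v) x + x" unfolding y_def uv by (simp add: gmul_add)
    then have zeq: "z = - gmul (m * v) x" unfolding z_def by simp
    have "gmul (p ^ k) z = - gmul (v * n) x" unfolding zeq
      by (simp add: gmul_uminus gmul_mult[symmetric] ny ac_simps)
    then have "gmul (p ^ k) z = 0" using gmul_kill1[OF less.prems(2)] by simp
    then have zp: "z \<in> ptors p" unfolding ptors_def using k1 by auto
    define c' where "c' = (\<lambda>q. c q + (if q = p then z else 0))"
    define S where "S = insert p {q. c q \<noteq> 0}"
    have fS: "finite S" using c unfolding is_prim_decomp_def S_def by simp
    have "is_prim_decomp x c'"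
    proof (rule decompI[where S=S])
      show "\<forall>q. c' q \<in> ptors q" using c zp unfolding c'_def is_prim_decomp_def
        by (auto intro: ptors_add)
      show "\<forall>q. \<not> prime q \<longrightarrow> c' q = 0" using c p unfolding c'_def is_prim_decomp_def by auto
      show "finite S" by (rule fS)
      show "{q. c' q \<noteq> 0} \<subseteq> S" unfolding c'_def S_def by auto
      have "sum c' S = sum c S + z" unfolding c'_def using fS
        by (simp add: sum.distrib S_def)
      also have "sum c S = y" using decompD[OF c fS] unfolding S_def by auto
      finally show "x = sum c' S" unfolding z_def by simp
    qed
    then show ?thesis by blast
  qed
qed




definition torsion :: "'a::ab_group_add itself \<Rightarrow> bool" where
  "torsion _ \<longleftrightarrow> (\<forall>x::'a. \<exists>n>0. gmul n x = 0)"

lemma pcomp_decomp: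
  fixes x :: "'a::ab_group_add"
  assumes "torsion TYPE('a)"
  shows "is_prim_decomp x (pcomp x)"
proof -
  obtain n where "n > 0" "gmul n x = 0" using assms unfolding torsion_def by blast
  then obtain c where c: "is_prim_decomp x c" using decomp_exists by blast
  show ?thesis unfolding pcomp_def
    by (rule theI[of _ c]) (use c decomp_unique in auto)
qed

lemma pcomp_eqI:
  fixes x :: "'a::ab_group_add"
  assumes "torsion TYPE('a)" "is_prim_decomp x c"
  shows "pcomp x = c"
  using decomp_unique[OF pcomp_decomp[OF assms(1)] assms(2)] .

lemma pcomp_in: "torsion TYPE('a) \<Longrightarrow> pcomp (x::'a::ab_group_add) p \<in> ptors p"
  using pcomp_decomp[of x] unfolding is_prim_decomp_def by blast

lemma pcomp_nonprime: "torsion TYPE('a) \<Longrightarrow> \<not> prime p \<Longrightarrow> pcomp (x::'a::ab_group_add) p = 0"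
  using pcomp_decomp[of x] unfolding is_prim_decomp_def by blast

lemma pcomp_finite: "torsion TYPE('a) \<Longrightarrow> finite {p. pcomp (x::'a::ab_group_add) p \<noteq> 0}"
  using pcomp_decomp[of x] unfolding is_prim_decomp_def by blast

lemma pcomp_sum: "torsion TYPE('a) \<Longrightarrow> finite S \<Longrightarrow> {p. pcomp (x::'a::ab_group_add) p \<noteq> 0} \<subseteq> S
   \<Longrightarrow> x = sum (pcomp x) S"
  using decompD[OF pcomp_decomp] by blast

lemma pcomp_add:
  fixes x y :: "'a::ab_group_add"
  assumes T: "torsion TYPE('a)"
  shows "pcomp (x + y) p = pcomp x p + pcomp y p"
proof -
  define S where "S = {p. pcomp x p \<noteq> 0} \<union> {p. pcomp y p \<noteq> 0}"
  have fS: "finite S" unfolding S_def using pcomp_finite[OF T] by simp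
  have "is_prim_decomp (x + y) (\<lambda>p. pcomp x p + pcomp y p)"
  proof (rule decompI[where S=S])
    show "\<forall>p. pcomp x p + pcomp y p \<in> ptors p" using pcomp_in[OF T] by (auto intro: ptors_add)
    show "\<forall>p. \<not> prime p \<longrightarrow> pcomp x p + pcomp y p = 0" using pcomp_nonprime[OF T] by simp
    show "finite S" by (rule fS)
    show "{p. pcomp x p + pcomp y p \<noteq> 0} \<subseteq> S" unfolding S_def by auto
    show "x + y = (\<Sum>p\<in>S. pcomp x p + pcomp y p)"
      using pcomp_sum[OF T fS, of x] pcomp_sum[OF T fS, of y] unfolding S_def
      by (simp add: sum.distrib)
  qed
  then show ?thesis using pcomp_eqI[OF T] by metis
qed

lemma pcomp_zero: "torsion TYPE('a) \<Longrightarrow> pcomp (0::'a::ab_group_add) p = 0"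
  using pcomp_add[of "0::'a" 0 p] by simp

lemma pcomp_uminus:
  "torsion TYPE('a) \<Longrightarrow> pcomp (- x::'a::ab_group_add) p = - pcomp x p"
  using pcomp_add[of x "-x" p] pcomp_zero[where 'a='a] by (simp add: eq_neg_iff_add_eq_0 add.commute)

lemma pcomp_diff:
  "torsion TYPE('a) \<Longrightarrow> pcomp (x - y::'a::ab_group_add) p = pcomp x p - pcomp y p"
  using pcomp_add[of x "-y" p] pcomp_uminus[of y p] by simp

lemma pcomp_ptors:
  fixes y :: "'a::ab_group_add"
  assumes T: "torsion TYPE('a)" and q: "prime q" "y \<in> ptors q"
  shows "pcomp y = (\<lambda>p. if p = q then y else 0)"
proof (rule pcomp_eqI[OF T], rule decompI[where S="{q}"])
qed (use q in auto)

lemma pcomp_same: "torsion TYPE('a) \<Longrightarrow> prime q \<Longrightarrow> (y::'a::ab_group_add) \<in> ptors q \<Longrightarrow> pcomp y q = y"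
  using pcomp_ptors by metis




definition vanish :: "'a::ab_group_add set \<Rightarrow> ('a \<Rightarrow> 'b::ab_group_add) \<Rightarrow> nat \<Rightarrow> bool" where
  "vanish S f m \<longleftrightarrow> (\<forall>as. length as = m \<longrightarrow> set as \<subseteq> S \<longrightarrow> (\<forall>x\<in>S. iter_Delta as f x = 0))"

definition closed_add :: "'a::ab_group_add set \<Rightarrow> bool" where
  "closed_add S \<longleftrightarrow> (\<forall>x\<in>S. \<forall>a\<in>S. x + a \<in> S)"

lemma closed_UNIV: "closed_add UNIV" unfolding closed_add_def by simp
lemma closed_ptors: "closed_add (ptors p)" unfolding closed_add_def by (auto intro: ptors_add)

lemma dv_vanish: "diffs_vanish_on S f n = vanish S f (Suc n)"
  unfolding diffs_vanish_on_def vanish_def by simp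

lemma vanish0: "vanish S f 0 \<longleftrightarrow> (\<forall>x\<in>S. f x = 0)"
  unfolding vanish_def by simp

lemma iter_Delta_into:
  assumes "closed_add S" "\<forall>x\<in>S. f x \<in> T" "\<forall>x\<in>T. \<forall>y\<in>T. x - y \<in> T"
  shows "set as \<subseteq> S \<Longrightarrow> x \<in> S \<Longrightarrow> iter_Delta as f x \<in> T"
proof (induction as arbitrary: x)
  case Nil then show ?case using assms by simp
next
  case (Cons a as)
  have "x + a \<in> S" using Cons.prems assms(1) unfolding closed_add_def by simp
  then show ?case using Cons assms(3) by (simp add: Delta_def)
qed

lemma vanish_Suc: "closed_add S \<Longrightarrow> vanish S f m \<Longrightarrow> vanish S f (Suc m)"
  unfolding vanish_def
proof (intro allI impI ballI)
  fix as x assume cl: "closed_add S" and V: "\<forall>as. length as = m \<longrightarrow> set as \<subseteq> S \<longrightarrow> (\<forall>x\<in>S. iter_Delta as f x = 0)"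
    and l: "length as = Suc m" and s: "set as \<subseteq> S" and x: "x \<in> S"
  obtain a bs where as: "as = a # bs" using l by (cases as) auto
  have "x + a \<in> S" using cl x s as unfolding closed_add_def by simp
  then show "iter_Delta as f x = 0" using V as l s x by (simp add: Delta_def)
qed

lemma vanish_mono: assumes "closed_add S" "vanish S f a" "a \<le> b" shows "vanish S f b"
  using assms(3) by (induction b rule: dec_induct) (auto intro: vanish_Suc assms)

lemma fdeg_minf: "fdeg_on S f = -\<infinity> \<longleftrightarrow> vanish S f 0"
  unfolding fdeg_on_def vanish0 by auto

lemma fdeg_le_ereal:
  assumes cl: "closed_add S"
  shows "fdeg_on S f \<le> ereal r \<longleftrightarrow>
    (if 0 \<le> r then vanish S f (Suc (nat \<lfloor>r\<rfloor>)) else vanish S f 0)"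
proof (cases "vanish S f 0")
  case True
  then show ?thesis using vanish_mono[OF cl True] unfolding fdeg_on_def vanish0 by simp
next
  case F: False
  show ?thesis
  proof (cases "\<exists>n. vanish S f (Suc n)")
    case True
    define L where "L = (LEAST n. vanish S f (Suc n))"
    have VL: "vanish S f (Suc L)" unfolding L_def using True by (rule LeastI_ex)
    have eq: "fdeg_on S f = ereal (real L)" using F True
      unfolding fdeg_on_def vanish0[symmetric] dv_vanish L_def by simp
    have "L \<le> K \<longleftrightarrow> vanish S f (Suc K)" for K
      using vanish_mono[OF cl VL, of "Suc K"] Least_le[of "\<lambda>n. vanish S f (Suc n)" K]
      unfolding L_def by auto
    moreover have "real L \<le> r \<longleftrightarrow> 0 \<le> r \<and> L \<le> nat \<lfloor>r\<rfloor>"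
      by linarith
    ultimately show ?thesis using F eq by auto
  next
    case False
    have eq: "fdeg_on S f = \<infinity>" using F False
      unfolding fdeg_on_def vanish0[symmetric] dv_vanish by simp
    show ?thesis using F False eq by simp
  qed
qed

lemma fdeg_le_iff_vanish:
  assumes "closed_add S" "closed_add T"
    and "\<And>m. vanish S f m \<longleftrightarrow> (\<forall>i\<in>I. vanish (U i) (g i) m)"
    and "\<And>i. i \<in> I \<Longrightarrow> closed_add (U i)"
  shows "fdeg_on S f \<le> e \<longleftrightarrow> (\<forall>i\<in>I. fdeg_on (U i) (g i) \<le> e)"
proof (cases e)
  case (real r)
  then show ?thesis using assms by (simp add: fdeg_le_ereal)
next
  case PInf
  then show ?thesis by simp
next
  case MInf
  then show ?thesis using assms by (simp add: fdeg_minf)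
qed

lemma fdeg_less_inf: "fdeg_on S f < \<infinity> \<longleftrightarrow> (\<exists>m. vanish S f m)"
proof -
  have "vanish S f m \<Longrightarrow> fdeg_on S f < \<infinity>" for m
    by (cases m) (auto simp: fdeg_on_def vanish0[symmetric] dv_vanish)
  moreover have "fdeg_on S f < \<infinity> \<Longrightarrow> \<exists>m. vanish S f m"
    by (auto simp: fdeg_on_def vanish0[symmetric] dv_vanish split: if_splits)
  ultimately show ?thesis by blast
qed

lemma fdeg_cases: "fdeg_on S f = -\<infinity> \<or> (\<exists>k::nat. fdeg_on S f = ereal (real k)) \<or> fdeg_on S f = \<infinity>"
  unfolding fdeg_on_def by auto




definition Gs :: "nat set \<Rightarrow> (nat \<Rightarrow> 'a::ab_group_add \<Rightarrow> 'b::ab_group_add) \<Rightarrow> 'a \<Rightarrow> 'b" where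
  "Gs F h x = (\<Sum>p\<in>F. h p (pcomp x p))"

definition supp :: "(nat \<Rightarrow> 'a::ab_group_add \<Rightarrow> 'b::ab_group_add) \<Rightarrow> nat set" where
  "supp f = {p. prime p \<and> \<not> (\<forall>x\<in>ptors p. f p x = 0)}"

lemma glue_Gs:
  fixes f :: "nat \<Rightarrow> 'a::ab_group_add \<Rightarrow> 'b::ab_group_add"
  assumes T: "torsion TYPE('a)" and pf: "prim_family f"
  shows "glue f = Gs (supp f) f"
proof
  fix x
  have fin: "finite (supp f)" using pf unfolding prim_family_def supp_def by simp
  have sub: "{p. prime p \<and> f p (pcomp x p) \<noteq> 0} \<subseteq> supp f"
    unfolding supp_def using pcomp_in[OF T] by auto
  show "glue f x = Gs (supp f) f x"
    unfolding glue_def Gs_def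
    by (rule sum.mono_neutral_left[OF fin sub]) (auto simp: supp_def)
qed

lemma Delta_Gs:
  assumes T: "torsion TYPE('a::ab_group_add)"
  shows "Delta a (Gs F h) = Gs F (\<lambda>p. Delta (pcomp (a::'a) p) (h p :: 'a \<Rightarrow> 'b::ab_group_add))"
  unfolding Delta_def Gs_def by (auto simp: pcomp_add[OF T] sum_subtractf)

lemma iter_Delta_Gs:
  assumes T: "torsion TYPE('a::ab_group_add)"
  shows "iter_Delta as (Gs F h) = Gs F (\<lambda>p. iter_Delta (map (\<lambda>a. pcomp (a::'a) p) as) (h p :: 'a \<Rightarrow> 'b::ab_group_add))"
  by (induction as) (simp_all add: Delta_Gs[OF T])

lemma ptors_minus_closed: "\<forall>x\<in>ptors p. \<forall>y\<in>ptors p. x - y \<in> ptors p"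
  by (auto intro: ptors_diff)

lemma zero_minus_closed: "\<forall>x\<in>{0::'b::ab_group_add}. \<forall>y\<in>{0}. x - y \<in> {0}" by simp

lemma glue_vanish:
  fixes f :: "nat \<Rightarrow> 'a::ab_group_add \<Rightarrow> 'b::ab_group_add"
  assumes T: "torsion TYPE('a)" and pf: "prim_family f"
  shows "vanish UNIV (glue f) m \<longleftrightarrow> (\<forall>p\<in>{p::nat. prime p}. vanish (ptors p) (f p) m)"
proof
  assume V: "vanish UNIV (glue f) m"
  show "\<forall>p\<in>{p::nat. prime p}. vanish (ptors p) (f p) m"
  proof
    fix p :: nat assume "p \<in> {p. prime p}"
    then have p: "prime p" by simp
    show "vanish (ptors p) (f p) m"
    proof (cases "p \<in> supp f")
      case False
      then have z: "\<forall>x\<in>ptors p. f p x \<in> {0}" using p unfolding supp_def by auto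
      show ?thesis unfolding vanish_def
        using iter_Delta_into[OF closed_ptors z zero_minus_closed] by auto
    next
      case True
      show ?thesis unfolding vanish_def
      proof (intro allI impI ballI)
        fix as :: "'a list" and x :: 'a assume l: "length as = m" and s: "set as \<subseteq> ptors p" and x: "x \<in> ptors p"
        define e where "e = (\<lambda>q. iter_Delta (map (\<lambda>a. pcomp a q) as) (f q) (pcomp x q))"
        have "0 = iter_Delta as (glue f) x" using V l unfolding vanish_def by simp
        also have "\<dots> = sum e (supp f)"
          unfolding glue_Gs[OF T pf] iter_Delta_Gs[OF T] Gs_def e_def ..
        finally have z: "sum e (supp f) = 0" by simp
        have fin: "finite (supp f)" using pf unfolding prim_family_def supp_def by simp
        have into: "\<forall>q\<in>supp f. prime q \<and> e q \<in> ptors q"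
        proof
          fix q assume q: "q \<in> supp f"
          then have qp: "prime q" unfolding supp_def by simp
          have fq: "\<forall>y\<in>ptors q. f q y \<in> ptors q" using pf qp unfolding prim_family_def by simp
          have "set (map (\<lambda>a. pcomp a q) as) \<subseteq> ptors q" using pcomp_in[OF T] by auto
          then show "prime q \<and> e q \<in> ptors q" unfolding e_def
            using iter_Delta_into[OF closed_ptors fq ptors_minus_closed] pcomp_in[OF T] qp by blast
        qed
        have "e p = 0" using decomp_unique0[OF fin into z True] .
        moreover have "map (\<lambda>a. pcomp a p) as = as"
          using s pcomp_same[OF T p] by (induction as) auto
        ultimately show "iter_Delta as (f p) x = 0" unfolding e_def using pcomp_same[OF T p x] by simp
      qed
    qed
  qed
next
  assume V: "\<forall>p\<in>{p::nat. prime p}. vanish (ptors p) (f p) m"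
  show "vanish UNIV (glue f) m" unfolding vanish_def
  proof (intro allI impI ballI)
    fix as :: "'a list" and x :: 'a assume l: "length as = m"
    have "iter_Delta as (glue f) x =
      (\<Sum>p\<in>supp f. iter_Delta (map (\<lambda>a. pcomp a p) as) (f p) (pcomp x p))"
      unfolding glue_Gs[OF T pf] iter_Delta_Gs[OF T] Gs_def ..
    also have "\<dots> = 0"
    proof (rule sum.neutral, rule ballI)
      fix p assume "p \<in> supp f"
      then have p: "prime p" unfolding supp_def by simp
      have "set (map (\<lambda>a. pcomp a p) as) \<subseteq> ptors p" using pcomp_in[OF T] by auto
      then show "iter_Delta (map (\<lambda>a. pcomp a p) as) (f p) (pcomp x p) = 0"
        using V p l pcomp_in[OF T] unfolding vanish_def by simp
    qed
    finally show "iter_Delta as (glue f) x = 0" .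
  qed
qed

lemma glue_fdeg_le:
  fixes f :: "nat \<Rightarrow> 'a::ab_group_add \<Rightarrow> 'b::ab_group_add"
  assumes T: "torsion TYPE('a)" and pf: "prim_family f"
  shows "fdeg (glue f) \<le> e \<longleftrightarrow> (\<forall>p\<in>{p::nat. prime p}. fdeg_on (ptors p) (f p) \<le> e)"
  by (rule fdeg_le_iff_vanish[OF closed_UNIV closed_UNIV glue_vanish[OF T pf] closed_ptors])

lemma glue_fdeg:
  fixes f :: "nat \<Rightarrow> 'a::ab_group_add \<Rightarrow> 'b::ab_group_add"
  assumes T: "torsion TYPE('a)" and pf: "prim_family f"
  shows "fdeg (glue f) = (SUP p\<in>{p. prime p}. fdeg_on (ptors p) (f p))"
proof -
  have "fdeg (glue f) \<le> e \<longleftrightarrow> (SUP p\<in>{p. prime p}. fdeg_on (ptors p) (f p)) \<le> e" for e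
    unfolding glue_fdeg_le[OF T pf] SUP_le_iff ..
  then show ?thesis by (meson order.antisym order.refl)
qed




lemma step_lemma:
  fixes psi :: "'a::ab_group_add \<Rightarrow> 'b::ab_group_add"
  assumes vals: "\<forall>y. Delta a psi y \<in> ptors p" and dd: "Delta a (Delta a psi) = (\<lambda>_. 0)"
    and a: "a \<in> ptors q" and pq: "prime p" "prime q" "p \<noteq> q"
  shows "Delta a psi = (\<lambda>_. 0)"
proof
  fix y
  define c where "c = Delta a psi"
  have cinv: "c (z + a) = c z" for z using fun_cong[OF dd, of z] unfolding c_def Delta_def[of a "Delta a psi"] by simp
  have cinvt: "c (y + gmul t a) = c y" for t
  proof (induction t)
    case (Suc t)
    have "y + gmul (Suc t) a = (y + gmul t a) + a" by (simp add: algebra_simps)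
    then have "c (y + gmul (Suc t) a) = c ((y + gmul t a) + a)" by (rule arg_cong)
    also have "\<dots> = c (y + gmul t a)" by (rule cinv)
    finally show ?case using Suc by simp
  qed simp
  have psit: "psi (y + gmul t a) = psi y + gmul t (c y)" for t
  proof (induction t)
    case (Suc t)
    have "y + gmul (Suc t) a = (y + gmul t a) + a" by (simp add: algebra_simps)
    then have "psi (y + gmul (Suc t) a) = psi ((y + gmul t a) + a)" by (rule arg_cong)
    also have "\<dots> = psi (y + gmul t a) + c (y + gmul t a)"
      unfolding c_def Delta_def by simp
    also have "\<dots> = psi y + gmul t (c y) + c y" using Suc cinvt by simp
    finally show ?case by (simp add: algebra_simps)
  qed simp
  obtain k where k: "gmul (q^k) a = 0" using a unfolding ptors_def by auto
  have 1: "gmul (q^k) (c y) = 0" using psit[of "q^k"] k by simp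
  obtain l where l: "gmul (p^l) (c y) = 0" using vals unfolding c_def ptors_def by blast
  have "coprime (p^l) (q^k)" using pq by (simp add: primes_coprime)
  then have "c y = 0" by (rule coprime_kill[OF l 1])
  then show "Delta a psi y = 0" unfolding c_def .
qed

lemma invariance:
  fixes h :: "'a::ab_group_add \<Rightarrow> 'b::ab_group_add"
  assumes hv: "\<forall>y. h y \<in> ptors p" and V: "vanish UNIV h m"
    and a: "a \<in> ptors q" and pq: "prime p" "prime q" "p \<noteq> q"
  shows "h (y + a) = h y"
proof -
  define phi where "phi j = iter_Delta (replicate j a) h" for j
  have phiS: "phi (Suc j) = Delta a (phi j)" for j unfolding phi_def by simp
  have phim: "phi m = (\<lambda>_. 0)"
  proof
    fix x
    have "length (replicate m a) = m \<longrightarrow> set (replicate m a) \<subseteq> UNIV \<longrightarrow> (\<forall>x\<in>UNIV. iter_Delta (replicate m a) h x = 0)"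
      using V unfolding vanish_def by (rule spec)
    then show "phi m x = 0" unfolding phi_def by simp
  qed
  have hv': "\<forall>x\<in>UNIV. h x \<in> ptors p" using hv by simp
  have vals: "\<forall>y. phi j y \<in> ptors p" for j
    unfolding phi_def using iter_Delta_into[OF closed_UNIV hv' ptors_minus_closed] by simp
  have down: "phi (Suc j + d) = (\<lambda>_. 0) \<Longrightarrow> phi (Suc j) = (\<lambda>_. 0)" for d j
  proof (induction d arbitrary: j)
    case (Suc d)
    have "phi (Suc (Suc j) + d) = (\<lambda>_. 0)" using Suc.prems by simp
    then have "phi (Suc (Suc j)) = (\<lambda>_. 0)" by (rule Suc.IH)
    then have dd: "Delta a (Delta a (phi j)) = (\<lambda>_. 0)" unfolding phiS .
    have vv: "\<forall>y. Delta a (phi j) y \<in> ptors p" using vals[of "Suc j"] unfolding phiS .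
    show ?case unfolding phiS by (rule step_lemma[OF vv dd a pq])
  qed simp
  show ?thesis
  proof (cases m)
    case 0
    then have "h = (\<lambda>_. 0)" using phim unfolding phi_def by simp
    then show ?thesis by simp
  next
    case (Suc m')
    then have "phi (Suc 0 + m') = (\<lambda>_. 0)" using phim by simp
    then have "phi (Suc 0) = (\<lambda>_. 0)" by (rule down)
    then have E: "(\<lambda>x. h (x + a) - h x) = (\<lambda>_. 0)" unfolding phi_def by (simp add: Delta_def)
    have "h (y + a) - h y = 0" using fun_cong[OF E, of y] by simp
    then show ?thesis by simp
  qed
qed

lemma sum_invariant:
  assumes "finite S" "\<forall>t\<in>S. \<forall>y. h (y + e t) = h y"
  shows "h (y + sum e S) = h y"
  using assms
proof (induction S arbitrary: y rule: finite_induct)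
  case (insert t S)
  have "h (y + sum e (insert t S)) = h ((y + sum e S) + e t)" using insert(1,2) by (simp add: algebra_simps)
  also have "\<dots> = h (y + sum e S)" using insert.prems by simp
  also have "\<dots> = h y" using insert by simp
  finally show ?case .
qed simp

lemma poly_pcomp:
  fixes g :: "'a::ab_group_add \<Rightarrow> 'b::ab_group_add"
  assumes TA: "torsion TYPE('a)" and TB: "torsion TYPE('b)"
    and V: "vanish UNIV g m" and p: "prime p"
  shows "pcomp (g (pcomp x p)) p = pcomp (g x) p"
proof -
  define h where "h y = pcomp (g y) p" for y
  have hv: "\<forall>y. h y \<in> ptors p" unfolding h_def using pcomp_in[OF TB] by simp
  have hit: "iter_Delta as h y = pcomp (iter_Delta as g y) p" for as y
    unfolding h_def by (induction as arbitrary: y) (simp_all add: Delta_def pcomp_diff[OF TB])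
  have Vh: "vanish UNIV h m" using V unfolding vanish_def hit by (simp add: pcomp_zero[OF TB])
  define S where "S = insert p {q. pcomp x q \<noteq> 0}"
  have fS: "finite S" unfolding S_def using pcomp_finite[OF TA] by simp
  have x: "x = pcomp x p + sum (pcomp x) (S - {p})"
    using pcomp_sum[OF TA fS, of x] sum.remove[OF fS, of p "pcomp x"] unfolding S_def by auto
  have inv: "\<forall>t\<in>S - {p}. \<forall>y. h (y + pcomp x t) = h y"
  proof (intro ballI allI)
    fix t y assume t: "t \<in> S - {p}"
    show "h (y + pcomp x t) = h y"
    proof (cases "prime t")
      case True
      then show ?thesis using invariance[OF hv Vh pcomp_in[OF TA] p True] t by simp
    next
      case False
      then show ?thesis using pcomp_nonprime[OF TA] by simp
    qed
  qed
  have "h x = h (pcomp x p)" using sum_invariant[OF _ inv, of "pcomp x p"] fS x by simp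
  then show ?thesis unfolding h_def by simp
qed




theorem corollary3:
  assumes torsA: "\<forall>x::'a::ab_group_add. \<exists>n>0. gmul n x = 0"
    and torsB: "\<forall>y::'b::ab_group_add. \<exists>n>0. gmul n y = 0"
    and finB: "finite {p::nat. prime p \<and> ptors p \<noteq> ({0} :: 'b set)}"
  shows "(\<forall>f :: nat \<Rightarrow> 'a \<Rightarrow> 'b. prim_family f \<longrightarrow>
            fdeg (glue f) = (SUP p\<in>{p. prime p}. fdeg_on (ptors p) (f p)))
       \<and> (\<forall>n::ereal. (n = -\<infinity> \<or> (\<exists>k::nat. n = ereal (real k))) \<longrightarrow>
            {g :: 'a \<Rightarrow> 'b. fdeg g \<le> n}
              = glue ` {f. prim_family f \<and> (\<forall>p. prime p \<longrightarrow> fdeg_on (ptors p) (f p) \<le> n)})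
       \<and> {g :: 'a \<Rightarrow> 'b. fdeg g < \<infinity>}
              = glue ` {f. prim_family f \<and> (\<forall>p. prime p \<longrightarrow> fdeg_on (ptors p) (f p) < \<infinity>)}"
proof -
  have TA: "torsion TYPE('a)" using torsA unfolding torsion_def .
  have TB: "torsion TYPE('b)" using torsB unfolding torsion_def .
  have partA: "\<forall>f :: nat \<Rightarrow> 'a \<Rightarrow> 'b. prim_family f \<longrightarrow>
            fdeg (glue f) = (SUP p\<in>{p. prime p}. fdeg_on (ptors p) (f p))"
    using glue_fdeg[OF TA] by blast
  have decomp_poly: "\<exists>f. prim_family f \<and> glue f = g" if V: "vanish UNIV g m" for g :: "'a \<Rightarrow> 'b" and m
  proof -
    define f where "f p y = pcomp (g y) p" for p y
    have pf: "prim_family f" unfolding prim_family_def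
    proof
      show "\<forall>p. prime p \<longrightarrow> (\<forall>x\<in>ptors p. f p x \<in> ptors p)" unfolding f_def using pcomp_in[OF TB] by simp
      have "{p. prime p \<and> \<not> (\<forall>x\<in>ptors p. f p x = 0)} \<subseteq> {p::nat. prime p \<and> ptors p \<noteq> ({0} :: 'b set)}"
      proof
        fix p assume "p \<in> {p. prime p \<and> \<not> (\<forall>x\<in>ptors p. f p x = 0)}"
        then obtain x where p: "prime p" and x: "pcomp (g x) p \<noteq> 0" unfolding f_def by auto
        have "pcomp (g x) p \<in> (ptors p :: 'b set)" by (rule pcomp_in[OF TB])
        then have "ptors p \<noteq> ({0} :: 'b set)" using x by auto
        then show "p \<in> {p::nat. prime p \<and> ptors p \<noteq> ({0} :: 'b set)}" using p by simp
      qed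
      then show "finite {p. prime p \<and> \<not> (\<forall>x\<in>ptors p. f p x = 0)}" using finB finite_subset by blast
    qed
    have "glue f = g"
    proof
      fix x
      define S where "S = {p. prime p \<and> pcomp (g x) p \<noteq> 0}"
      have "{p. prime p \<and> f p (pcomp x p) \<noteq> 0} = S"
        unfolding S_def f_def using poly_pcomp[OF TA TB V] by auto
      then have "glue f x = (\<Sum>p\<in>S. f p (pcomp x p))" unfolding glue_def by simp
      also have "\<dots> = (\<Sum>p\<in>S. pcomp (g x) p)"
        unfolding S_def f_def using poly_pcomp[OF TA TB V] by (intro sum.cong) auto
      also have "\<dots> = g x"
      proof -
        have fS: "finite S" unfolding S_def
          using pcomp_finite[OF TB, of "g x"] by (rule finite_subset[rotated]) auto
        have "{p. pcomp (g x) p \<noteq> 0} \<subseteq> S" unfolding S_def using pcomp_nonprime[OF TB] by auto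
        then show ?thesis using pcomp_sum[OF TB fS] by simp
      qed
      finally show "glue f x = g x" .
    qed
    then show ?thesis using pf by blast
  qed
  have partB: "\<forall>n::ereal. (n = -\<infinity> \<or> (\<exists>k::nat. n = ereal (real k))) \<longrightarrow>
            {g :: 'a \<Rightarrow> 'b. fdeg g \<le> n}
              = glue ` {f. prim_family f \<and> (\<forall>p. prime p \<longrightarrow> fdeg_on (ptors p) (f p) \<le> n)}"
  proof (intro allI impI)
    fix n :: ereal assume n: "n = -\<infinity> \<or> (\<exists>k::nat. n = ereal (real k))"
    show "{g :: 'a \<Rightarrow> 'b. fdeg g \<le> n}
              = glue ` {f. prim_family f \<and> (\<forall>p. prime p \<longrightarrow> fdeg_on (ptors p) (f p) \<le> n)}"
    proof
      show "glue ` {f. prim_family f \<and> (\<forall>p. prime p \<longrightarrow> fdeg_on (ptors p) (f p) \<le> n)} \<subseteq> {g :: 'a \<Rightarrow> 'b. fdeg g \<le> n}"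
      proof
        fix g :: "'a \<Rightarrow> 'b" assume "g \<in> glue ` {f. prim_family f \<and> (\<forall>p. prime p \<longrightarrow> fdeg_on (ptors p) (f p) \<le> n)}"
        then obtain f :: "nat \<Rightarrow> 'a \<Rightarrow> 'b" where pf: "prim_family f"
          and fn: "\<forall>p. prime p \<longrightarrow> fdeg_on (ptors p) (f p) \<le> n" and g: "g = glue f" by blast
        have "fdeg (glue f) \<le> n" using glue_fdeg_le[OF TA pf, of n] fn by simp
        then show "g \<in> {g. fdeg g \<le> n}" using g by simp
      qed
      show "{g :: 'a \<Rightarrow> 'b. fdeg g \<le> n} \<subseteq> glue ` {f. prim_family f \<and> (\<forall>p. prime p \<longrightarrow> fdeg_on (ptors p) (f p) \<le> n)}"
      proof
        fix g :: "'a \<Rightarrow> 'b" assume "g \<in> {g. fdeg g \<le> n}"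
        then have gn: "fdeg g \<le> n" by simp
        have "n < \<infinity>" using n by auto
        then have "fdeg g < \<infinity>" using gn by (meson le_less_trans)
        then obtain m where "vanish UNIV g m" using fdeg_less_inf by blast
        then obtain f where pf: "prim_family f" and gf: "glue f = g" using decomp_poly by blast
        have "\<forall>p. prime p \<longrightarrow> fdeg_on (ptors p) (f p) \<le> n"
          using glue_fdeg_le[OF TA pf, of n] gn gf by simp
        then show "g \<in> glue ` {f. prim_family f \<and> (\<forall>p. prime p \<longrightarrow> fdeg_on (ptors p) (f p) \<le> n)}"
          using pf gf by blast
      qed
    qed
  qed
  have partC: "{g :: 'a \<Rightarrow> 'b. fdeg g < \<infinity>}
              = glue ` {f. prim_family f \<and> (\<forall>p. prime p \<longrightarrow> fdeg_on (ptors p) (f p) < \<infinity>)}"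
  proof
    show "{g :: 'a \<Rightarrow> 'b. fdeg g < \<infinity>} \<subseteq> glue ` {f. prim_family f \<and> (\<forall>p. prime p \<longrightarrow> fdeg_on (ptors p) (f p) < \<infinity>)}"
    proof
      fix g :: "'a \<Rightarrow> 'b" assume "g \<in> {g. fdeg g < \<infinity>}"
      then have gi: "fdeg g < \<infinity>" by simp
      define n where "n = fdeg g"
      have n: "n = -\<infinity> \<or> (\<exists>k::nat. n = ereal (real k))" using fdeg_cases[of UNIV g] gi unfolding n_def by auto
      have "g \<in> {g. fdeg g \<le> n}" unfolding n_def by simp
      then obtain f where f: "prim_family f" "\<forall>p. prime p \<longrightarrow> fdeg_on (ptors p) (f p) \<le> n" "g = glue f"
        using partB n by blast
      then have "\<forall>p. prime p \<longrightarrow> fdeg_on (ptors p) (f p) < \<infinity>" using gi unfolding n_def by auto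
      then show "g \<in> glue ` {f. prim_family f \<and> (\<forall>p. prime p \<longrightarrow> fdeg_on (ptors p) (f p) < \<infinity>)}"
        using f by blast
    qed
    show "glue ` {f. prim_family f \<and> (\<forall>p. prime p \<longrightarrow> fdeg_on (ptors p) (f p) < \<infinity>)} \<subseteq> {g :: 'a \<Rightarrow> 'b. fdeg g < \<infinity>}"
    proof
      fix g :: "'a \<Rightarrow> 'b" assume "g \<in> glue ` {f. prim_family f \<and> (\<forall>p. prime p \<longrightarrow> fdeg_on (ptors p) (f p) < \<infinity>)}"
      then obtain f :: "nat \<Rightarrow> 'a \<Rightarrow> 'b" where pf: "prim_family f" and fi: "\<forall>p. prime p \<longrightarrow> fdeg_on (ptors p) (f p) < \<infinity>"
        and g: "g = glue f" by blast
      define L where "L p = (LEAST m. vanish (ptors p) (f p) m)" for p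
      have fin: "finite (supp f)" using pf unfolding prim_family_def supp_def by simp
      define M where "M = Max (insert 0 (L ` supp f))"
      have "vanish (ptors p) (f p) M" if p: "prime p" for p
      proof (cases "p \<in> supp f")
        case True
        have "\<exists>m. vanish (ptors p) (f p) m" using fi p fdeg_less_inf by blast
        then have "vanish (ptors p) (f p) (L p)" unfolding L_def by (rule LeastI_ex)
        moreover have "L p \<le> M" unfolding M_def using fin True by simp
        ultimately show ?thesis using vanish_mono[OF closed_ptors] by blast
      next
        case False
        then have "vanish (ptors p) (f p) 0" using p unfolding supp_def vanish0 by simp
        then show ?thesis using vanish_mono[OF closed_ptors] by blast
      qed
      then have "vanish UNIV (glue f) M" using glue_vanish[OF TA pf] by simp
      then show "g \<in> {g. fdeg g < \<infinity>}" using g fdeg_less_inf by blast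
    qed
  qed
  show ?thesis using partA partB partC by blast
qed


end
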